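(* Let $q$ be an odd prime power, let $\omega$ be a non-square in $\mathbb F_q$ and $\epsilon\in\mathbb F_{q^2}$ with $\epsilon^2=\omega$; write $z=z_1+\epsilon z_2$ ($z_1,z_2\in\mathbb F_q$) for $z\in\mathbb F_{q^2}$. Let $\mathcal C: aX^2+bXY+cXZ+YZ+eZ^2=0$ be a non-singular conic of $\mathrm{PG}(2,q^2)$ with $a,b,c,e\in\mathbb F_{q^2}$ and $b\notin\mathbb F_q$ (i.e. $b_2\ne0$). Put $A=-a_2b_1+a_1b_2$, $B=b_2c_1-b_1c_2+a_1\cdot 0-a_2$, $C=c_1\cdot 0-c_2+b_2e_1-b_1e_2$, $D=-e_2$ (the general formulas $A=-a_2b_1+a_1b_2$, $B=b_2c_1-b_1c_2-a_2d_1+a_1d_2$, $C=-c_2d_1+c_1d_2+b_2e_1-b_1e_2$, $D=d_2e_1-d_1e_2$ with $d=1$, i.e. $d_1=1,d_2=0$), and let $\mathcal S$ be the (irreducible) cubic surface of $\mathrm{PG}(3,q)$ in coordinates $(t_1:t_2:X:Z)$ given by $$2t_1t_2(b_1X+d_1Z)-(t_1^2+\omega t_2^2)(b_2X+d_2Z)+AX^3+BX^2Z+CXZ^2+DZ^3=0$$ (with $d_1=1,d_2=0$). Then $\mathcal S$ has at most one singular point; if $P$ is a singular point of $\mathcal S$, then $P$ is a double point and $P$ is defined over $\mathbb F_q$.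
   Context: Singular points are considered over the algebraic closure of $\mathbb F_q$. The normalization $d=1$ and the irreducibility condition $b_1d_2-b_2d_1\ne0$ are the standing assumptions of the section in which the result is stated. *)

theory Defs
  imports "HOL-Algebra.Algebraic_Closure_Type" "HOL-Library.Numeral_Type"
begin

definition point_mult_ge :: "(('n \<Rightarrow> 'b::field) \<Rightarrow> 'b) \<Rightarrow> ('n \<Rightarrow> 'b) \<Rightarrow> nat \<Rightarrow> bool" where
  "point_mult_ge F P m \<longleftrightarrow>
     (\<forall>v. \<exists>p. (\<forall>t. poly p t = F (\<lambda>i. P i + t * v i)) \<and> [:0, 1:] ^ m dvd p)"

definition singular_point :: "(('n \<Rightarrow> 'b::field) \<Rightarrow> 'b) \<Rightarrow> ('n \<Rightarrow> 'b) \<Rightarrow> bool" where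
  "singular_point F P \<longleftrightarrow> P \<noteq> (\<lambda>_. 0) \<and> point_mult_ge F P 2"

definition double_point :: "(('n \<Rightarrow> 'b::field) \<Rightarrow> 'b) \<Rightarrow> ('n \<Rightarrow> 'b) \<Rightarrow> bool" where
  "double_point F P \<longleftrightarrow> P \<noteq> (\<lambda>_. 0) \<and> point_mult_ge F P 2 \<and> \<not> point_mult_ge F P 3"

definition proj_eq :: "('n \<Rightarrow> 'b::field) \<Rightarrow> ('n \<Rightarrow> 'b) \<Rightarrow> bool" where
  "proj_eq P Q \<longleftrightarrow> (\<exists>c. c \<noteq> 0 \<and> Q = (\<lambda>i. c * P i))"

text \<open>Conic a X^2 + b X Y + c X Z + Y Z + e Z^2 in coordinates (X:Y:Z) = (x 1 : x 2 : x 3).\<close>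
definition conicF :: "'b::field \<Rightarrow> 'b \<Rightarrow> 'b \<Rightarrow> 'b \<Rightarrow> (3 \<Rightarrow> 'b) \<Rightarrow> 'b" where
  "conicF a b c e x = a * x 1 ^ 2 + b * x 1 * x 2 + c * x 1 * x 3 + x 2 * x 3 + e * x 3 ^ 2"

text \<open>Cubic surface in coordinates (t1:t2:X:Z) = (x 1 : x 2 : x 3 : x 4), with d1 = 1, d2 = 0:
  2 t1 t2 (b1 X + d1 Z) - (t1^2 + w t2^2)(b2 X + d2 Z) + A X^3 + B X^2 Z + C X Z^2 + D Z^3.\<close>
definition surfaceF :: "'b::field \<Rightarrow> 'b \<Rightarrow> 'b \<Rightarrow> 'b \<Rightarrow> 'b \<Rightarrow> 'b \<Rightarrow> 'b \<Rightarrow> (4 \<Rightarrow> 'b) \<Rightarrow> 'b" where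
  "surfaceF w b1 b2 A B C D x =
     2 * x 1 * x 2 * (b1 * x 3 + 1 * x 4) - (x 1 ^ 2 + w * x 2 ^ 2) * (b2 * x 3 + 0 * x 4)
     + A * x 3 ^ 3 + B * x 3 ^ 2 * x 4 + C * x 3 * x 4 ^ 2 + D * x 4 ^ 3"

end

theory Submission
  imports Defs "HOL-Number_Theory.Residues"
begin


lemma exhaust_4':
  fixes x :: 4
  shows "x = 1 \<or> x = 2 \<or> x = 3 \<or> x = 4"
proof (induct x)
  case (of_int z)
  then have "z = 0 \<or> z = 1 \<or> z = 2 \<or> z = 3" by fastforce
  then show ?case by auto
qed

lemma exhaust_3':
  fixes x :: 3
  shows "x = 1 \<or> x = 2 \<or> x = 3"
proof (induct x)
  case (of_int z)
  then have "z = 0 \<or> z = 1 \<or> z = 2" by fastforce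
  then show ?case by auto
qed

lemma two_nz:
  assumes "odd CARD('a::{field,finite})"
  shows "(2::'a) \<noteq> 0"
proof
  assume "(2::'a) = 0"
  hence "of_nat 2 = (0::'a)" by simp
  hence "CHAR('a) dvd 2" by (simp only: of_nat_eq_0_iff_char_dvd)
  hence "CHAR('a) = 2" using CHAR_not_1' prime_CHAR_semidom
    by (metis dvd_1_left dvd_antisym dvd_refl nat_dvd_1_iff_1 two_is_prime_nat prime_nat_iff)
  with CHAR_dvd_CARD[where 'a='a] assms show False by simp
qed

lemma ac_infinite: "infinite (UNIV :: 'a::field alg_closure set)"
proof
  assume fin: "finite (UNIV :: 'a alg_closure set)"
  define p where "p = (\<Prod>a\<in>(UNIV :: 'a alg_closure set). [:-a, 1:]) + 1"
  have d: "degree (\<Prod>a\<in>(UNIV :: 'a alg_closure set). [:-a, 1:]) = card (UNIV :: 'a alg_closure set)"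
    using fin by (subst degree_prod_eq_sum_degree) auto
  have "card (UNIV :: 'a alg_closure set) > 0" using fin by (simp add: finite_UNIV_card_ge_0)
  hence "degree p > 0" unfolding p_def using d
    by (metis degree_add_eq_left degree_1)
  then obtain x where "poly p x = 0" using alg_closed_imp_poly_has_root by blast
  moreover have "poly (\<Prod>a\<in>(UNIV :: 'a alg_closure set). [:-a, 1:]) x = 0"
    using fin by (simp add: poly_prod)
  ultimately show False by (simp add: p_def)
qed

lemma poly_eqI_ac:
  fixes p q :: "'a::field alg_closure poly"
  assumes "\<And>t. poly p t = poly q t"
  shows "p = q"
proof (rule ccontr)
  assume "p \<noteq> q"
  hence "p - q \<noteq> 0" by simp
  hence "finite {x. poly (p - q) x = 0}" by (rule poly_roots_finite)
  moreover have "{x. poly (p - q) x = 0} = UNIV" using assms by auto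
  ultimately show False using ac_infinite by auto
qed

lemma pm_coeff:
  fixes F :: "('n \<Rightarrow> 'a::field alg_closure) \<Rightarrow> 'a alg_closure"
  assumes "point_mult_ge F P m" "\<And>t. F (\<lambda>i. P i + t * v i) = poly q t" "k < m"
  shows "coeff q k = 0"
proof -
  obtain p where p: "\<forall>t. poly p t = F (\<lambda>i. P i + t * v i)" "[:0, 1:] ^ m dvd p"
    using assms(1) unfolding point_mult_ge_def by blast
  have "p = q" by (rule poly_eqI_ac) (use p assms(2) in auto)
  with p(2) have "monom 1 m dvd q" by (simp add: monom_altdef)
  thus ?thesis using assms(3) monom_1_dvd_iff' by blast
qed



lemma conic_Delta:
  fixes a b c e :: "'a::field alg_closure"
  assumes "\<forall>P. \<not> singular_point (conicF a b c e) P"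
  shows "a + e*b^2 - b*c \<noteq> 0"
proof
  assume D: "a + e*b^2 - b*c = 0"
  hence aeq: "a = b*c - e*b^2" by (simp add: algebra_simps)
  define P :: "3 \<Rightarrow> 'a alg_closure" where "P = (\<lambda>i. if i = 1 then 1 else if i = 2 then 2*e*b - c else -b)"
  have n: "(2::3) \<noteq> 1" "(3::3) \<noteq> 1" "(3::3) \<noteq> 2" by simp_all
  have P1: "P 1 = 1" "P 2 = 2*e*b - c" "P 3 = -b" using n by (simp_all add: P_def)
  have "point_mult_ge (conicF a b c e) P 2"
    unfolding point_mult_ge_def
  proof
    fix v :: "3 \<Rightarrow> 'a alg_closure"
    show "\<exists>p. (\<forall>t. poly p t = conicF a b c e (\<lambda>i. P i + t * v i)) \<and> [:0, 1:] ^ 2 dvd p"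
    proof (intro exI conjI allI)
      fix t
      show "poly [:0, 0, conicF a b c e v:] t = conicF a b c e (\<lambda>i. P i + t * v i)"
        unfolding conicF_def P1 aeq by (simp add: algebra_simps power2_eq_square)
      show "[:0, 1:] ^ 2 dvd [:0, 0, conicF a b c e v:]"
      proof -
        have "[:0,1:]^2 = (monom 1 2 :: 'a alg_closure poly)" by (simp add: monom_altdef)
        moreover have "monom 1 2 dvd [:0, 0, conicF a b c e v:]"
          unfolding monom_1_dvd_iff' by (auto simp: less_2_cases_iff)
        ultimately show ?thesis by simp
      qed
    qed
  qed
  moreover have "P \<noteq> (\<lambda>_. 0)" using P1 by (metis one_neq_zero)
  ultimately show False using assms unfolding singular_point_def by blast
qed



lemma surf_expand:
  fixes w b1 b2 A B C D t :: "'a::field alg_closure" and x v :: "4 \<Rightarrow> 'a alg_closure"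
  shows "surfaceF w b1 b2 A B C D (\<lambda>i. x i + t * v i) = poly
    [: surfaceF w b1 b2 A B C D x,
       2*((x 1*v 2 + v 1*x 2)*(b1*x 3 + x 4) + x 1*x 2*(b1*v 3 + v 4))
         - b2*((2*x 1*v 1 + 2*w*x 2*v 2)*x 3 + (x 1^2 + w*x 2^2)*v 3)
         + 3*A*x 3^2*v 3 + B*(2*x 3*v 3*x 4 + x 3^2*v 4) + C*(v 3*x 4^2 + 2*x 3*x 4*v 4) + 3*D*x 4^2*v 4,
       2*(v 1*v 2*(b1*x 3 + x 4) + (x 1*v 2 + v 1*x 2)*(b1*v 3 + v 4))
         - b2*((v 1^2 + w*v 2^2)*x 3 + (2*x 1*v 1 + 2*w*x 2*v 2)*v 3)
         + 3*A*x 3*v 3^2 + B*(v 3^2*x 4 + 2*x 3*v 3*v 4) + C*(x 3*v 4^2 + 2*v 3*x 4*v 4) + 3*D*x 4*v 4^2,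
       surfaceF w b1 b2 A B C D v :] t"
  unfolding surfaceF_def by (simp add: algebra_simps power2_eq_square power3_eq_cube)



lemma num4: "(2::4) \<noteq> 1" "(3::4) \<noteq> 1" "(4::4) \<noteq> 1" "(3::4) \<noteq> 2" "(4::4) \<noteq> 2" "(4::4) \<noteq> 3"
  by simp_all

lemma surf_sing:
  fixes w b1 b2 A B C D :: "'a::field alg_closure" and P :: "4 \<Rightarrow> 'a alg_closure"
  assumes two: "(2::'a alg_closure) \<noteq> 0" and w: "w \<noteq> 0" and b2: "b2 \<noteq> 0"
    and hnz: "\<And>\<delta>. \<delta>^2 = w \<Longrightarrow> A + B*(\<delta>*b2 - b1) + C*(\<delta>*b2 - b1)^2 + D*(\<delta>*b2 - b1)^3 \<noteq> 0"
    and sing: "singular_point (surfaceF w b1 b2 A B C D) P"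
  shows "P 1 = 0 \<and> P 2 = 0 \<and> (P 3 \<noteq> 0 \<or> P 4 \<noteq> 0)
     \<and> A*P 3^3 + B*P 3^2*P 4 + C*P 3*P 4^2 + D*P 4^3 = 0
     \<and> 3*A*P 3^2 + 2*B*P 3*P 4 + C*P 4^2 = 0
     \<and> B*P 3^2 + 2*C*P 3*P 4 + 3*D*P 4^2 = 0
     \<and> double_point (surfaceF w b1 b2 A B C D) P"
proof -
  let ?S = "surfaceF w b1 b2 A B C D"
  define x1 where "x1 = P 1"
  define x2 where "x2 = P 2"
  define x3 where "x3 = P 3"
  define x4 where "x4 = P 4"
  have nz: "P \<noteq> (\<lambda>_. 0)" and m2: "point_mult_ge ?S P 2" using sing unfolding singular_point_def by auto
  have nz4: "x1 \<noteq> 0 \<or> x2 \<noteq> 0 \<or> x3 \<noteq> 0 \<or> x4 \<noteq> 0"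
  proof (rule ccontr)
    assume "\<not> ?thesis"
    hence "P = (\<lambda>_. 0)" unfolding x1_def x2_def x3_def x4_def using exhaust_4' by (auto intro!: ext) (metis)
    with nz show False by simp
  qed
  have co: "coeff [: ?S P, c1, c2, c3 :] k = 0"
    if "\<And>t. ?S (\<lambda>i. P i + t * v i) = poly [: ?S P, c1, c2, c3 :] t" "point_mult_ge ?S P m" "k < m"
    for v c1 c2 c3 m k using pm_coeff[OF that(2) that(1) that(3)] .
  define e1 :: "4 \<Rightarrow> 'a alg_closure" where "e1 = (\<lambda>i. if i = 1 then 1 else 0)"
  define e2 :: "4 \<Rightarrow> 'a alg_closure" where "e2 = (\<lambda>i. if i = 2 then 1 else 0)"
  define e3 :: "4 \<Rightarrow> 'a alg_closure" where "e3 = (\<lambda>i. if i = 3 then 1 else 0)"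
  define e4 :: "4 \<Rightarrow> 'a alg_closure" where "e4 = (\<lambda>i. if i = 4 then 1 else 0)"
  define e12 :: "4 \<Rightarrow> 'a alg_closure" where "e12 = (\<lambda>i. if i = 1 \<or> i = 2 then 1 else 0)"
  note ex = surf_expand[of w b1 b2 A B C D P]
  have S0: "?S P = 0" using co[OF ex m2, of 0 e1] by simp
  have E1: "2*(x2*(b1*x3 + x4)) - b2*(2*x1*x3) = 0"
    using co[OF ex m2, of 1 e1] by (simp add: e1_def num4 x1_def x2_def x3_def x4_def numeral_2_eq_2)
  have E2: "2*(x1*(b1*x3 + x4)) - b2*(2*w*x2*x3) = 0"
    using co[OF ex m2, of 1 e2] by (simp add: e2_def num4 x1_def x2_def x3_def x4_def)
  have E3: "2*(x1*x2*b1) - b2*(x1^2 + w*x2^2) + 3*A*x3^2 + B*(2*x3*x4) + C*x4^2 = 0"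
    using co[OF ex m2, of 1 e3] by (simp add: e3_def num4 x1_def x2_def x3_def x4_def)
  have E4: "2*(x1*x2) + B*x3^2 + C*(2*x3*x4) + 3*D*x4^2 = 0"
    using co[OF ex m2, of 1 e4] by (simp add: e4_def num4 x1_def x2_def x3_def x4_def)
  define L where "L = b1*x3 + x4"
  have F1: "x2*L = b2*x1*x3"
  proof -
    have "2*(x2*L - b2*x1*x3) = 0" using E1 unfolding L_def by (simp add: algebra_simps)
    thus ?thesis using two by simp
  qed
  have F2: "x1*L = w*b2*x2*x3"
  proof -
    have "2*(x1*L - w*b2*x2*x3) = 0" using E2 unfolding L_def by (simp add: algebra_simps)
    thus ?thesis using two by simp
  qed
  have S0': "2*x1*x2*L - (x1^2 + w*x2^2)*(b2*x3) + A*x3^3 + B*x3^2*x4 + C*x3*x4^2 + D*x4^3 = 0"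
    using S0 unfolding surfaceF_def L_def x1_def x2_def x3_def x4_def by simp
  have x12: "x1 = 0 \<and> x2 = 0"
  proof (rule ccontr)
    assume nn: "\<not> (x1 = 0 \<and> x2 = 0)"
    have "x2*(L^2 - w*b2^2*x3^2) = L*(x2*L - b2*x1*x3) + b2*x3*(x1*L - w*b2*x2*x3)"
      by (simp add: algebra_simps power2_eq_square)
    moreover have "x1*(L^2 - w*b2^2*x3^2) = L*(x1*L - w*b2*x2*x3) + w*b2*x3*(x2*L - b2*x1*x3)"
      by (simp add: algebra_simps power2_eq_square)
    ultimately have "x2*(L^2 - w*b2^2*x3^2) = 0" "x1*(L^2 - w*b2^2*x3^2) = 0" using F1 F2 by simp_all
    hence LL: "L^2 = w*b2^2*x3^2" using nn by auto
    show False
    proof (cases "x3 = 0")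
      case True
      hence "L = 0" using LL by simp
      hence x4: "x4 = 0" using True L_def by simp
      have "x1*x2 = 0" using E4 True x4 two by simp
      moreover have "b2*(x1^2 + w*x2^2) = 0" using E3 True x4 \<open>x1*x2 = 0\<close> by simp
      ultimately show False using nn w b2 by auto
    next
      case False
      define \<delta> where "\<delta> = L / (b2*x3)"
      have Ld: "L = \<delta>*b2*x3" using False b2 by (simp add: \<delta>_def)
      have d2: "\<delta>^2 = w" using LL Ld False b2 by (simp add: power_mult_distrib)
      have x4: "x4 = (\<delta>*b2 - b1)*x3" using Ld L_def by (simp add: algebra_simps)
      have x1: "x1 = \<delta>*x2" using F1 Ld False b2 by (simp add: algebra_simps)
      have "x3^3 * (A + B*(\<delta>*b2 - b1) + C*(\<delta>*b2 - b1)^2 + D*(\<delta>*b2 - b1)^3) = 0"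
      proof -
        have "2*x1*x2*L - (x1^2 + w*x2^2)*(b2*x3) = 0"
          unfolding x1 Ld using d2 by (simp add: algebra_simps power2_eq_square)
        with S0' have "A*x3^3 + B*x3^2*x4 + C*x3*x4^2 + D*x4^3 = 0" by simp
        thus ?thesis unfolding x4 by (simp add: algebra_simps power2_eq_square power3_eq_cube)
      qed
      thus False using hnz[OF d2] False by simp
    qed
  qed
  have dp: "\<not> point_mult_ge ?S P 3"
  proof
    assume m3: "point_mult_ge ?S P 3"
    show False
    proof (cases "x3 = 0")
      case False
      have "-(b2*x3) = 0"
        using co[OF ex m3, of 2 e1] x12 by (simp add: e1_def num4 x1_def x2_def x3_def x4_def numeral_2_eq_2)
      thus False using False b2 by simp
    next
      case True
      hence "x4 \<noteq> 0" using nz4 x12 by simp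
      have "2*x4 = 0"
        using co[OF ex m3, of 2 e12] x12 True by (simp add: e12_def num4 x1_def x2_def x3_def x4_def numeral_2_eq_2)
      thus False using two \<open>x4 \<noteq> 0\<close> by simp
    qed
  qed
  show ?thesis
    using x12 nz4 S0' E3 E4 dp nz m2 unfolding double_point_def x1_def x2_def x3_def x4_def
    by (simp add: algebra_simps)
qed



lemma root_rel:
  fixes A B C D u z :: "'b::field"
  assumes "u \<noteq> 0"
    and g: "A*u^3 + B*u^2*z + C*u*z^2 + D*z^3 = 0"
    and gZ: "B*u^2 + 2*C*u*z + 3*D*z^2 = 0"
  shows "B = -2*C*(z/u) - 3*D*(z/u)^2 \<and> A = C*(z/u)^2 + 2*D*(z/u)^3"
proof -
  define r where "r = z/u"
  have z: "z = r*u" using assms(1) by (simp add: r_def)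
  have "u^2*(B + 2*C*r + 3*D*r^2) = 0" using gZ unfolding z by (simp add: algebra_simps power2_eq_square)
  hence "B + 2*C*r + 3*D*r^2 = 0" using assms(1) by simp
  moreover have "B = (B + 2*C*r + 3*D*r^2) - 2*C*r - 3*D*r^2" by simp
  ultimately have h1: "B = -2*C*r - 3*D*r^2" by simp
  have "u^3*(A + B*r + C*r^2 + D*r^3) = 0" using g unfolding z by (simp add: algebra_simps power2_eq_square power3_eq_cube)
  hence "A + B*r + C*r^2 + D*r^3 = 0" using assms(1) by simp
  hence "A = C*r^2 + 2*D*r^3" unfolding h1 by (simp add: algebra_simps power2_eq_square power3_eq_cube)
  thus ?thesis using h1 r_def by simp
qed

lemma cubic_uniq:
  fixes A B C D u z u' z' :: "'b::field"
  assumes two: "(2::'b) \<noteq> 0" and nz: "\<not> (A = 0 \<and> B = 0 \<and> C = 0 \<and> D = 0)"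
    and p1: "u \<noteq> 0 \<or> z \<noteq> 0" "A*u^3 + B*u^2*z + C*u*z^2 + D*z^3 = 0"
       "3*A*u^2 + 2*B*u*z + C*z^2 = 0" "B*u^2 + 2*C*u*z + 3*D*z^2 = 0"
    and p2: "u' \<noteq> 0 \<or> z' \<noteq> 0" "A*u'^3 + B*u'^2*z' + C*u'*z'^2 + D*z'^3 = 0"
       "3*A*u'^2 + 2*B*u'*z' + C*z'^2 = 0" "B*u'^2 + 2*C*u'*z' + 3*D*z'^2 = 0"
  shows "\<exists>c. c \<noteq> 0 \<and> u' = c*u \<and> z' = c*z"
proof -
  have inf: "C = 0 \<and> D = 0" if "Y = 0" "W \<noteq> 0" "A*Y^3 + B*Y^2*W + C*Y*W^2 + D*W^3 = 0"
       "3*A*Y^2 + 2*B*Y*W + C*W^2 = 0" for Y W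
    using that by simp
  show ?thesis
  proof (cases "u = 0")
    case True
    hence z: "z \<noteq> 0" using p1 by simp
    have CD: "C = 0 \<and> D = 0" using inf[OF True z p1(2,3)] .
    show ?thesis
    proof (cases "u' = 0")
      case True
      hence "z' \<noteq> 0" using p2 by simp
      thus ?thesis using z True \<open>u = 0\<close> by (intro exI[of _ "z'/z"]) auto
    next
      case False
      from root_rel[OF False p2(2,4)] CD nz show ?thesis by simp
    qed
  next
    case False
    note rr = root_rel[OF False p1(2,4)]
    show ?thesis
    proof (cases "u' = 0")
      case True
      hence z: "z' \<noteq> 0" using p2 by simp
      have CD: "C = 0 \<and> D = 0" using inf[OF True z p2(2,3)] .
      from rr CD nz show ?thesis by simp
    next
      case u': False
      note rr' = root_rel[OF u' p2(2,4)]
      define r where "r = z/u"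
      define r' where "r' = z'/u'"
      show ?thesis
      proof (cases "r = r'")
        case True
        show ?thesis
          using True False u' unfolding r_def r'_def
          by (intro exI[of _ "u'/u"]) (auto simp: field_simps)
      next
        case ne: False
        have e1: "B = -2*C*r - 3*D*r^2" "A = C*r^2 + 2*D*r^3" using rr r_def by auto
        have e2: "B = -2*C*r' - 3*D*r'^2" "A = C*r'^2 + 2*D*r'^3" using rr' r'_def by auto
        have "(r' - r)*(2*C + 3*D*(r+r')) = 0"
          using e1(1) e2(1) by (simp add: algebra_simps power2_eq_square)
        hence k1: "2*C + 3*D*(r+r') = 0" using ne by simp
        have "(r' - r)*(C*(r+r') + 2*D*(r^2 + r*r' + r'^2)) = 0"
          using e1(2) e2(2) by (simp add: algebra_simps power2_eq_square power3_eq_cube)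
        hence k2: "C*(r+r') + 2*D*(r^2 + r*r' + r'^2) = 0" using ne by simp
        have "D*(r - r')^2 = 2*(C*(r+r') + 2*D*(r^2 + r*r' + r'^2)) - (r+r')*(2*C + 3*D*(r+r'))"
          by (simp add: algebra_simps power2_eq_square)
        hence "D*(r - r')^2 = 0" using k1 k2 by simp
        hence D: "D = 0" using ne by simp
        hence "2*C = 0" using k1 by simp
        hence C: "C = 0" using two by simp
        show ?thesis using e1 C D nz by simp
      qed
    qed
  qed
qed



lemma cube_surj:
  assumes "(3::'a::{field,finite}) = 0"
  shows "\<exists>s::'a. s^3 = y"
proof -
  have "inj (\<lambda>x::'a. x^3)"
  proof (rule injI)
    fix x y :: 'a assume "x^3 = y^3"
    have "(x - y)^3 = x^3 - y^3 - 3*(x^2*y) + 3*(x*y^2)" by (simp add: algebra_simps power2_eq_square power3_eq_cube)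
    also have "\<dots> = 0" using assms \<open>x^3 = y^3\<close> by simp
    finally show "x = y" by simp
  qed
  hence "surj (\<lambda>x::'a. x^3)" using finite_UNIV_inj_surj[of "\<lambda>x::'a. x^3"] by simp
  thus ?thesis by (metis surjD)
qed

lemma cubic_rat:
  fixes A B C D :: "'a::{field,finite}" and u z :: "'a alg_closure"
  assumes two: "(2::'a) \<noteq> 0" and nz: "\<not> (A = 0 \<and> B = 0 \<and> C = 0 \<and> D = 0)"
    and p1: "u \<noteq> 0 \<or> z \<noteq> 0" "to_ac A*u^3 + to_ac B*u^2*z + to_ac C*u*z^2 + to_ac D*z^3 = 0"
       "3*to_ac A*u^2 + 2*to_ac B*u*z + to_ac C*z^2 = 0" "to_ac B*u^2 + 2*to_ac C*u*z + 3*to_ac D*z^2 = 0"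
  shows "\<exists>c s1 s2. u = c * to_ac s1 \<and> z = c * to_ac s2"
proof (cases "u = 0")
  case True
  thus ?thesis by (intro exI[of _ z] exI[of _ 0] exI[of _ 1]) simp
next
  case False
  define r where "r = z/u"
  have zr: "z = u*r" using False by (simp add: r_def)
  have e: "to_ac B = -2*to_ac C*r - 3*to_ac D*r^2" "to_ac A = to_ac C*r^2 + 2*to_ac D*r^3"
    using root_rel[OF False p1(2,4)] r_def by auto
  have "\<exists>s. r = to_ac s"
  proof (cases "6*B*D - 2*C^2 = 0")
    case False
    have "r*to_ac (6*B*D - 2*C^2) = to_ac (B*C - 9*A*D)"
      unfolding to_ac_mult to_ac_diff to_ac_numeral to_ac_power e
      by (simp add: algebra_simps power2_eq_square power3_eq_cube)
    moreover have N: "to_ac (6*B*D - 2*C^2) \<noteq> 0" using False to_ac_eq_0_iff by blast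
    ultimately have "r = to_ac (B*C - 9*A*D) / to_ac (6*B*D - 2*C^2)"
      by (metis nonzero_mult_div_cancel_right)
    hence "r = to_ac ((B*C - 9*A*D)/(6*B*D - 2*C^2))" by (simp only: to_ac_divide)
    thus ?thesis by blast
  next
    case True
    hence CC: "to_ac C^2 = 3*to_ac B*to_ac D"
    proof -
      have "2*(C^2 - 3*B*D) = 0" using True by (simp add: algebra_simps)
      hence "C^2 - 3*B*D = 0" using two by (metis mult_eq_0_iff)
      hence "C^2 = 3*B*D" by (metis right_minus_eq)
      hence "to_ac (C^2) = to_ac (3*B*D)" by simp
      thus ?thesis by simp
    qed
    have "(to_ac C + 3*to_ac D*r)^2 = 3*to_ac D*(to_ac B + 2*to_ac C*r + 3*to_ac D*r^2)"
      using CC by (simp add: algebra_simps power2_eq_square)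
    also have "\<dots> = 0" using e(1) by simp
    finally have "to_ac C + 3*to_ac D*r = 0" by simp
    hence Cr: "to_ac C = -(3*to_ac D*r)" by (simp add: eq_neg_iff_add_eq_0)
    show ?thesis
    proof (cases "3*D = 0")
      case False
      have N: "3*to_ac D \<noteq> 0" using False by (metis to_ac_eq_0_iff to_ac_mult to_ac_numeral)
      have "r = -to_ac C / (3*to_ac D)" using Cr N by (simp add: field_simps)
      hence "r = to_ac (-C/(3*D))" by simp
      thus ?thesis by blast
    next
      case True
      hence "to_ac (3*D) = 0" by (metis to_ac_0)
      hence "3*to_ac D = 0" by (metis to_ac_mult to_ac_numeral)
      hence "to_ac C = 0" using Cr by simp
      hence C0: "C = 0" by simp
      show ?thesis
      proof (cases "D = 0")
        case True
        thus ?thesis using e C0 nz by simp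
      next
        case Dn: False
        hence three: "(3::'a) = 0" using \<open>3*D = 0\<close> by simp
        obtain s where s: "s^3 = A/(2*D)" using cube_surj[OF three] by blast
        have "to_ac A = 2*to_ac D*r^3" using e(2) C0 by simp
        moreover have "(2::'a alg_closure) \<noteq> 0" using two by (metis to_ac_numeral to_ac_eq_0_iff)
        ultimately have "r^3 = to_ac (A/(2*D))" using Dn by (simp add: field_simps)
        hence r3: "r^3 = to_ac s^3" using s by (metis to_ac_power)
        have "(r - to_ac s)^3 = r^3 - to_ac s^3 - 3*(r^2*to_ac s) + 3*(r*to_ac s^2)"
          by (simp add: algebra_simps power2_eq_square power3_eq_cube)
        moreover have "(3::'a alg_closure) = 0" using three by (metis to_ac_numeral to_ac_0)
        ultimately have "(r - to_ac s)^3 = 0" using r3 by simp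
        hence "r = to_ac s" by simp
        thus ?thesis by blast
      qed
    qed
  qed
  then obtain s where "r = to_ac s" by blast
  thus ?thesis using zr by (intro exI[of _ u] exI[of _ 1] exI[of _ s]) simp
qed



lemma delta_gen:
  fixes a1 a2 b1 b2 c1 c2 e1 e2 w eps :: "'b::comm_ring_1"
  assumes "eps^2 = w"
  shows "(a1 + eps*a2) + (e1 + eps*e2)*(b1 + eps*b2)^2 - (b1 + eps*b2)*(c1 + eps*c2)
    = (a1 + e1*(b1^2 + w*b2^2) + 2*w*e2*b1*b2 - b1*c1 - w*b2*c2)
      + eps*(a2 + 2*e1*b1*b2 + e2*(b1^2 + w*b2^2) - b1*c2 - b2*c1)"
  unfolding assms[symmetric] by (simp add: algebra_simps power2_eq_square power3_eq_cube)

lemma h_gen: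
  fixes a1 a2 b1 b2 c1 c2 e1 e2 w eps :: "'b::comm_ring_1"
  assumes "eps^2 = w"
  shows "(-a2*b1 + a1*b2) + (b2*c1 - b1*c2 - a2*1 + a1*0)*(eps*b2 - b1)
     + (-c2*1 + c1*0 + b2*e1 - b1*e2)*(eps*b2 - b1)^2 + (0*e1 - 1*e2)*(eps*b2 - b1)^3
    = b2*((a1 + e1*(b1^2 + w*b2^2) + 2*w*e2*b1*b2 - b1*c1 - w*b2*c2)
      - eps*(a2 + 2*e1*b1*b2 + e2*(b1^2 + w*b2^2) - b1*c2 - b2*c1))"
  unfolding assms[symmetric] by (simp add: algebra_simps power2_eq_square power3_eq_cube)

lemma h_gen':
  fixes a1 a2 b1 b2 c1 c2 e1 e2 w eps :: "'b::comm_ring_1"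
  assumes "eps^2 = w"
  shows "(-a2*b1 + a1*b2) + (b2*c1 - b1*c2 - a2*1 + a1*0)*((-eps)*b2 - b1)
     + (-c2*1 + c1*0 + b2*e1 - b1*e2)*((-eps)*b2 - b1)^2 + (0*e1 - 1*e2)*((-eps)*b2 - b1)^3
    = b2*((a1 + e1*(b1^2 + w*b2^2) + 2*w*e2*b1*b2 - b1*c1 - w*b2*c2)
      + eps*(a2 + 2*e1*b1*b2 + e2*(b1^2 + w*b2^2) - b1*c2 - b2*c1))"
  unfolding assms[symmetric] by (simp add: algebra_simps power2_eq_square power3_eq_cube)



theorem mainTheorem6:
  fixes \<omega> a1 a2 b1 b2 c1 c2 e1 e2 :: "'a::{field,finite}"
    and \<epsilon> :: "'a alg_closure"
  assumes q_odd: "odd CARD('a)"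
    and \<omega>_nonsq: "\<not> (\<exists>x. x * x = \<omega>)"
    and \<epsilon>_sq: "\<epsilon> ^ 2 = to_ac \<omega>"
    and b2: "b2 \<noteq> 0"
    and conic_nonsing: "\<forall>P. \<not> singular_point
           (conicF (to_ac a1 + \<epsilon> * to_ac a2) (to_ac b1 + \<epsilon> * to_ac b2)
                   (to_ac c1 + \<epsilon> * to_ac c2) (to_ac e1 + \<epsilon> * to_ac e2)) P"
  defines "S \<equiv> surfaceF (to_ac \<omega>) (to_ac b1) (to_ac b2)
      (to_ac (- a2 * b1 + a1 * b2))
      (to_ac (b2 * c1 - b1 * c2 - a2 * 1 + a1 * 0))
      (to_ac (- c2 * 1 + c1 * 0 + b2 * e1 - b1 * e2))
      (to_ac (0 * e1 - 1 * e2))"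
  shows "(\<forall>P Q. singular_point S P \<and> singular_point S Q \<longrightarrow> proj_eq P Q)
       \<and> (\<forall>P. singular_point S P \<longrightarrow>
             double_point S P \<and> (\<exists>c. \<exists>p :: 4 \<Rightarrow> 'a. P = (\<lambda>i. c * to_ac (p i))))"
proof -
  have two: "(2::'a) \<noteq> 0" using two_nz[OF q_odd] .
  have twoK: "(2::'a alg_closure) \<noteq> 0" using two by (metis to_ac_numeral to_ac_eq_0_iff)
  have w0: "\<omega> \<noteq> 0" using \<omega>_nonsq by auto
  have wK: "to_ac \<omega> \<noteq> 0" using w0 by simp
  have b2K: "to_ac b2 \<noteq> 0" using b2 by simp
  define X0 where "X0 = a1 + e1*(b1^2 + \<omega>*b2^2) + 2*\<omega>*e2*b1*b2 - b1*c1 - \<omega>*b2*c2"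
  define Y0 where "Y0 = a2 + 2*e1*b1*b2 + e2*(b1^2 + \<omega>*b2^2) - b1*c2 - b2*c1"
  have XK: "to_ac X0 = to_ac a1 + to_ac e1*(to_ac b1^2 + to_ac \<omega>*to_ac b2^2) + 2*to_ac \<omega>*to_ac e2*to_ac b1*to_ac b2 - to_ac b1*to_ac c1 - to_ac \<omega>*to_ac b2*to_ac c2"
    by (simp add: X0_def)
  have YK: "to_ac Y0 = to_ac a2 + 2*to_ac e1*to_ac b1*to_ac b2 + to_ac e2*(to_ac b1^2 + to_ac \<omega>*to_ac b2^2) - to_ac b1*to_ac c2 - to_ac b2*to_ac c1"
    by (simp add: Y0_def)
  have Dl: "to_ac X0 + \<epsilon> * to_ac Y0 \<noteq> 0"
    using conic_Delta[OF conic_nonsing] unfolding delta_gen[OF \<epsilon>_sq] XK YK .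
  have Dl': "to_ac X0 - \<epsilon> * to_ac Y0 \<noteq> 0"
  proof
    assume h: "to_ac X0 - \<epsilon> * to_ac Y0 = 0"
    show False
    proof (cases "Y0 = 0")
      case True
      thus False using h Dl by simp
    next
      case False
      hence "\<epsilon> = to_ac (X0/Y0)" using h by (simp add: field_simps)
      hence "to_ac \<omega> = to_ac ((X0/Y0)*(X0/Y0))" using \<epsilon>_sq by (simp add: power2_eq_square)
      hence "(X0/Y0)*(X0/Y0) = \<omega>" by (metis to_ac_eq_iff)
      thus False using \<omega>_nonsq by blast
    qed
  qed
  define AA where "AA = - a2 * b1 + a1 * b2"
  define BB where "BB = b2 * c1 - b1 * c2 - a2 * 1 + a1 * 0"
  define CC where "CC = - c2 * 1 + c1 * 0 + b2 * e1 - b1 * e2"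
  define DD where "DD = 0 * e1 - 1 * e2"
  have hnz: "to_ac AA + to_ac BB*(\<delta>*to_ac b2 - to_ac b1) + to_ac CC*(\<delta>*to_ac b2 - to_ac b1)^2
      + to_ac DD*(\<delta>*to_ac b2 - to_ac b1)^3 \<noteq> 0" if d: "\<delta>^2 = to_ac \<omega>" for \<delta>
  proof -
    have "(\<delta> - \<epsilon>)*(\<delta> + \<epsilon>) = 0" using d \<epsilon>_sq by (simp add: algebra_simps power2_eq_square)
    hence "\<delta> = \<epsilon> \<or> \<delta> = -\<epsilon>" by (auto simp: eq_neg_iff_add_eq_0)
    thus ?thesis
    proof
      assume "\<delta> = \<epsilon>"
      thus ?thesis using h_gen[OF \<epsilon>_sq, of "to_ac a2" "to_ac b1" "to_ac a1" "to_ac b2" "to_ac c1" "to_ac c2" "to_ac e1" "to_ac e2"]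
        Dl' b2K unfolding AA_def BB_def CC_def DD_def XK YK by simp
    next
      assume "\<delta> = -\<epsilon>"
      thus ?thesis using h_gen'[OF \<epsilon>_sq, of "to_ac a2" "to_ac b1" "to_ac a1" "to_ac b2" "to_ac c1" "to_ac c2" "to_ac e1" "to_ac e2"]
        Dl b2K unfolding AA_def BB_def CC_def DD_def XK YK by simp
    qed
  qed
  have nz: "\<not> (AA = 0 \<and> BB = 0 \<and> CC = 0 \<and> DD = 0)"
    using hnz[OF \<epsilon>_sq] by auto
  have nzK: "\<not> (to_ac AA = 0 \<and> to_ac BB = 0 \<and> to_ac CC = 0 \<and> to_ac DD = 0)"
    using nz by simp
  have SS: "S = surfaceF (to_ac \<omega>) (to_ac b1) (to_ac b2) (to_ac AA) (to_ac BB) (to_ac CC) (to_ac DD)"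
    unfolding S_def AA_def BB_def CC_def DD_def ..
  have ss: "P 1 = 0 \<and> P 2 = 0 \<and> (P 3 \<noteq> 0 \<or> P 4 \<noteq> 0)
     \<and> to_ac AA*P 3^3 + to_ac BB*P 3^2*P 4 + to_ac CC*P 3*P 4^2 + to_ac DD*P 4^3 = 0
     \<and> 3*to_ac AA*P 3^2 + 2*to_ac BB*P 3*P 4 + to_ac CC*P 4^2 = 0
     \<and> to_ac BB*P 3^2 + 2*to_ac CC*P 3*P 4 + 3*to_ac DD*P 4^2 = 0
     \<and> double_point S P" if "singular_point S P" for P
    unfolding SS by (rule surf_sing[OF twoK wK b2K]) (use hnz that SS in auto)
  have ext4: "F = G" if "F 1 = G 1" "F 2 = G 2" "F 3 = G 3" "F 4 = G 4" for F G :: "4 \<Rightarrow> 'a alg_closure"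
    using that exhaust_4' by (metis ext)
  show ?thesis
  proof (intro conjI allI impI)
    fix P Q assume "singular_point S P \<and> singular_point S Q"
    hence sP: "singular_point S P" and sQ: "singular_point S Q" by auto
    note rP = ss[OF sP] and rQ = ss[OF sQ]
    obtain c where c: "c \<noteq> 0" "Q 3 = c * P 3" "Q 4 = c * P 4"
      using cubic_uniq[OF twoK nzK, of "P 3" "P 4" "Q 3" "Q 4"] rP rQ by blast
    have "Q = (\<lambda>i. c * P i)" by (rule ext4) (use c rP rQ in simp_all)
    thus "proj_eq P Q" unfolding proj_eq_def using c by blast
  next
    fix P assume sP: "singular_point S P"
    note rP = ss[OF sP]
    show "double_point S P" using rP by simp
    obtain c s1 s2 where cs: "P 3 = c * to_ac s1" "P 4 = c * to_ac s2"
      using cubic_rat[OF two nz, of "P 3" "P 4"] rP by blast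
    define p :: "4 \<Rightarrow> 'a" where "p = (\<lambda>i. if i = 3 then s1 else if i = 4 then s2 else 0)"
    have "P = (\<lambda>i. c * to_ac (p i))" by (rule ext4) (use cs rP in \<open>simp_all add: p_def num4\<close>)
    thus "\<exists>c. \<exists>p :: 4 \<Rightarrow> 'a. P = (\<lambda>i. c * to_ac (p i))" by blast
  qed
qed

end
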